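(* Every proof of a formula $F$ in $\mathsf{PA}^\exists$ can be transformed into a proof of $F$ of the following form: there are proofs $\mathcal{D}_1,\dots,\mathcal{D}_n$ of $F$ that are purely intuitionistic (contain no application of the rule $\mathsf{EM}$, possibly with open assumptions), and the proof of $F$ is obtained from $\mathcal{D}_1,\dots,\mathcal{D}_n$ by repeated applications of the rule $\mathsf{EM}$ only, each with conclusion $F$.
   Context: $\mathsf{PA}^\exists$ is presented as a natural deduction system for arithmetic over $0,\mathsf{S},+,\cdot,=$ whose formulas are $\exists$-translations (so no universal quantifier occurs and no $\forall$-rules are used), where the $\exists$-translation is: $F^\exists=F$ for atomic $F$; commuting with $\wedge,\vee,\to,\exists$; $(\forall xF)^\exists=\neg\exists x\neg F^\exists$. Its rules are the intuitionistic natural deduction rules for $\wedge,\vee,\to,\exists,\bot$, the ($\exists$-translated) arithmetical axioms, the translated induction rule $\mathrm{Ind}^\exists$: from $\Gamma\vdash A(0)$ and $\Gamma\vdash\neg\exists\alpha\neg(A(\alpha)\to A(\mathsf{S}\alpha))$ infer $\Gamma\vdash\neg\exists\alpha\neg A(\alpha)$, and the classical rule $\mathsf{EM}$: for any formulas $A,C$, from $\Gamma,A\vdash C$ and $\Gamma,\neg A\vdash C$ infer $\Gamma\vdash C$ (discharging $A$ and $\neg A$). *)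

theory Defs
  imports Main
begin

datatype tm = Var nat | Zero | Succ tm | Plus tm tm | Times tm tm

text \<open>Formulas of PA-exists: no universal quantifier occurs.  Every such formula is
its own exists-translation, and every exists-translation is of this shape.
The binder FEx binds de Bruijn index 0.\<close>
datatype fm = FEq tm tm | FBot | FAnd fm fm | FOr fm fm | FImp fm fm | FEx fm

definition neg :: "fm \<Rightarrow> fm" where "neg A = FImp A FBot"

primrec tsub :: "(nat \<Rightarrow> tm) \<Rightarrow> tm \<Rightarrow> tm" where
  "tsub \<sigma> (Var n) = \<sigma> n"
| "tsub \<sigma> Zero = Zero"
| "tsub \<sigma> (Succ t) = Succ (tsub \<sigma> t)"
| "tsub \<sigma> (Plus s t) = Plus (tsub \<sigma> s) (tsub \<sigma> t)"
| "tsub \<sigma> (Times s t) = Times (tsub \<sigma> s) (tsub \<sigma> t)"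

definition tlift :: "tm \<Rightarrow> tm" where "tlift t = tsub (\<lambda>n. Var (Suc n)) t"

definition up :: "(nat \<Rightarrow> tm) \<Rightarrow> nat \<Rightarrow> tm" where
  "up \<sigma> n = (case n of 0 \<Rightarrow> Var 0 | Suc m \<Rightarrow> tlift (\<sigma> m))"

primrec fsub :: "(nat \<Rightarrow> tm) \<Rightarrow> fm \<Rightarrow> fm" where
  "fsub \<sigma> (FEq s t) = FEq (tsub \<sigma> s) (tsub \<sigma> t)"
| "fsub \<sigma> FBot = FBot"
| "fsub \<sigma> (FAnd A B) = FAnd (fsub \<sigma> A) (fsub \<sigma> B)"
| "fsub \<sigma> (FOr A B) = FOr (fsub \<sigma> A) (fsub \<sigma> B)"
| "fsub \<sigma> (FImp A B) = FImp (fsub \<sigma> A) (fsub \<sigma> B)"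
| "fsub \<sigma> (FEx A) = FEx (fsub (up \<sigma>) A)"

text \<open>Shift all free variables up by one (used for the eigenvariable of exists-elimination).\<close>
definition flift :: "fm \<Rightarrow> fm" where "flift A = fsub (\<lambda>n. Var (Suc n)) A"

text \<open>A(t): instantiate the variable bound by an outer FEx (index 0) with t.\<close>
definition inst :: "fm \<Rightarrow> tm \<Rightarrow> fm" where
  "inst A t = fsub (\<lambda>n. case n of 0 \<Rightarrow> t | Suc m \<Rightarrow> Var m) A"

text \<open>A(S alpha), keeping alpha (index 0) in place.\<close>
definition step_inst :: "fm \<Rightarrow> fm" where
  "step_inst A = fsub (\<lambda>n. if n = 0 then Succ (Var 0) else Var n) A"

inductive pa_axiom :: "fm \<Rightarrow> bool" where
  eq_refl: "pa_axiom (FEq t t)"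
| eq_subst: "pa_axiom (FImp (FEq s t) (FImp (inst A s) (inst A t)))"
| succ_nz: "pa_axiom (neg (FEq (Succ t) Zero))"
| succ_inj: "pa_axiom (FImp (FEq (Succ s) (Succ t)) (FEq s t))"
| plus_0: "pa_axiom (FEq (Plus t Zero) t)"
| plus_S: "pa_axiom (FEq (Plus s (Succ t)) (Succ (Plus s t)))"
| times_0: "pa_axiom (FEq (Times t Zero) Zero)"
| times_S: "pa_axiom (FEq (Times s (Succ t)) (Plus (Times s t) s))"

text \<open>nd em Gamma F: F is derivable from the open assumptions \<Gamma>;
the rule EM may only be used when em = True.  So nd True is PA-exists and
nd False its purely intuitionistic (EM-free) fragment.\<close>
inductive nd :: "bool \<Rightarrow> fm set \<Rightarrow> fm \<Rightarrow> bool" where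
  Assm: "A \<in> \<Gamma> \<Longrightarrow> nd e \<Gamma> A"
| Ax: "pa_axiom A \<Longrightarrow> nd e \<Gamma> A"
| AndI: "nd e \<Gamma> A \<Longrightarrow> nd e \<Gamma> B \<Longrightarrow> nd e \<Gamma> (FAnd A B)"
| AndE1: "nd e \<Gamma> (FAnd A B) \<Longrightarrow> nd e \<Gamma> A"
| AndE2: "nd e \<Gamma> (FAnd A B) \<Longrightarrow> nd e \<Gamma> B"
| OrI1: "nd e \<Gamma> A \<Longrightarrow> nd e \<Gamma> (FOr A B)"
| OrI2: "nd e \<Gamma> B \<Longrightarrow> nd e \<Gamma> (FOr A B)"
| OrE: "nd e \<Gamma> (FOr A B) \<Longrightarrow> nd e (insert A \<Gamma>) C \<Longrightarrow> nd e (insert B \<Gamma>) C \<Longrightarrow> nd e \<Gamma> C"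
| ImpI: "nd e (insert A \<Gamma>) B \<Longrightarrow> nd e \<Gamma> (FImp A B)"
| ImpE: "nd e \<Gamma> (FImp A B) \<Longrightarrow> nd e \<Gamma> A \<Longrightarrow> nd e \<Gamma> B"
| BotE: "nd e \<Gamma> FBot \<Longrightarrow> nd e \<Gamma> A"
| ExI: "nd e \<Gamma> (inst A t) \<Longrightarrow> nd e \<Gamma> (FEx A)"
| ExE: "nd e \<Gamma> (FEx A) \<Longrightarrow> nd e (insert A (flift ` \<Gamma>)) (flift C) \<Longrightarrow> nd e \<Gamma> C"
| Ind: "nd e \<Gamma> (inst A Zero) \<Longrightarrow> nd e \<Gamma> (neg (FEx (neg (FImp A (step_inst A)))))
        \<Longrightarrow> nd e \<Gamma> (neg (FEx (neg A)))"
| EM: "nd True (insert A \<Gamma>) C \<Longrightarrow> nd True (insert (neg A) \<Gamma>) C \<Longrightarrow> nd True \<Gamma> C"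

inductive em_tree :: "fm set \<Rightarrow> fm \<Rightarrow> bool" where
  Leaf: "nd False \<Gamma> F \<Longrightarrow> em_tree \<Gamma> F"
| Node: "em_tree (insert A \<Gamma>) F \<Longrightarrow> em_tree (insert (neg A) \<Gamma>) F \<Longrightarrow> em_tree \<Gamma> F"

end

theory Submission
  imports Defs
begin

lemma tsub_comp: "tsub \<sigma> (tsub \<tau> t) = tsub (\<lambda>n. tsub \<sigma> (\<tau> n)) t"
  by (induct t) auto

lemma up_comp: "tsub (up \<sigma>) (up \<tau> n) = up (\<lambda>n. tsub \<sigma> (\<tau> n)) n"
  by (cases n) (simp_all add: up_def tlift_def tsub_comp)

lemma fsub_comp: "fsub \<sigma> (fsub \<tau> X) = fsub (\<lambda>n. tsub \<sigma> (\<tau> n)) X"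
  by (induct X arbitrary: \<sigma> \<tau>) (simp_all add: tsub_comp up_comp)

lemma tsub_Var: "tsub Var t = t" by (induct t) auto

lemma up_Var: "up Var = Var"
  by (rule ext) (simp add: up_def tlift_def split: nat.split)

lemma fsub_Var: "fsub Var X = X"
  by (induct X) (simp_all add: tsub_Var up_Var)

lemma inst_lift: "inst (fsub (up (\<lambda>n. Var (Suc n))) Y) (Var 0) = Y"
proof -
  have "(\<lambda>n. tsub (\<lambda>n. case n of 0 \<Rightarrow> Var 0 | Suc m \<Rightarrow> Var m) (up (\<lambda>n. Var (Suc n)) n)) = Var"
    by (rule ext, case_tac n) (simp_all add: up_def tlift_def)
  then show ?thesis by (simp add: inst_def fsub_comp fsub_Var)
qed

lemma flift_neg: "flift (FImp X FBot) = FImp (flift X) FBot"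
  by (simp add: flift_def)

lemma flift_ex: "flift (FEx Y) = FEx (fsub (up (\<lambda>n. Var (Suc n))) Y)"
  by (simp add: flift_def)

lemma nd_weaken: "nd e \<Gamma> F \<Longrightarrow> \<Gamma> \<subseteq> \<Delta> \<Longrightarrow> nd e \<Delta> F"
proof (induct arbitrary: \<Delta> rule: nd.induct)
  case (OrE e \<Gamma> A B C) then show ?case by (meson insert_mono nd.OrE)
next
  case (ImpI e A \<Gamma> B) then show ?case by (meson insert_mono nd.ImpI)
next
  case (ExE e \<Gamma> A C) then show ?case by (meson image_mono insert_mono nd.ExE)
next
  case (EM A \<Gamma> C) then show ?case by (meson insert_mono nd.EM)
qed (auto intro: nd.intros)

lemma tree_weaken: "em_tree \<Gamma> F \<Longrightarrow> \<Gamma> \<subseteq> \<Delta> \<Longrightarrow> em_tree \<Delta> F"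
proof (induct arbitrary: \<Delta> rule: em_tree.induct)
  case (Leaf \<Gamma> F) then show ?case by (meson em_tree.Leaf nd_weaken)
next
  case (Node A \<Gamma> F) then show ?case by (meson em_tree.Node insert_mono)
qed

lemma graft: "em_tree \<Gamma> A \<Longrightarrow> (\<And>\<Delta>. \<Gamma> \<subseteq> \<Delta> \<Longrightarrow> nd False \<Delta> A \<Longrightarrow> em_tree \<Delta> B) \<Longrightarrow> em_tree \<Gamma> B"
proof (induct rule: em_tree.induct)
  case (Leaf \<Gamma> F) then show ?case by blast
next
  case (Node A \<Gamma> F)
  have "em_tree (insert A \<Gamma>) B" using Node by blast
  moreover have "em_tree (insert (neg A) \<Gamma>) B" using Node by blast
  ultimately show ?case by (rule em_tree.Node)
qed

lemma tmap: "em_tree \<Gamma> A \<Longrightarrow> (\<And>\<Delta>. \<Gamma> \<subseteq> \<Delta> \<Longrightarrow> nd False \<Delta> A \<Longrightarrow> nd False \<Delta> B) \<Longrightarrow> em_tree \<Gamma> B"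
  by (erule graft) (blast intro: em_tree.Leaf)

lemma tmap2: "em_tree \<Gamma> A \<Longrightarrow> em_tree \<Gamma> B \<Longrightarrow>
   (\<And>\<Delta>. \<Gamma> \<subseteq> \<Delta> \<Longrightarrow> nd False \<Delta> A \<Longrightarrow> nd False \<Delta> B \<Longrightarrow> nd False \<Delta> C) \<Longrightarrow> em_tree \<Gamma> C"
proof (erule graft)
  fix \<Delta> assume b: "em_tree \<Gamma> B" and h: "\<And>\<Delta>. \<Gamma> \<subseteq> \<Delta> \<Longrightarrow> nd False \<Delta> A \<Longrightarrow> nd False \<Delta> B \<Longrightarrow> nd False \<Delta> C"
    and d: "\<Gamma> \<subseteq> \<Delta>" "nd False \<Delta> A"
  show "em_tree \<Delta> C"
    by (rule tmap[OF tree_weaken[OF b d(1)]]) (meson d h nd_weaken order_trans)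
qed

lemma tree_imp: "em_tree \<Delta> B \<Longrightarrow> \<Delta> \<subseteq> insert A \<Gamma> \<Longrightarrow> em_tree \<Gamma> (FImp A B)"
proof (induct arbitrary: \<Gamma> rule: em_tree.induct)
  case (Leaf \<Delta> F) then show ?case by (meson em_tree.Leaf nd.ImpI nd_weaken)
next
  case (Node L \<Delta> F)
  have "em_tree (insert L \<Gamma>) (FImp A F)" using Node by (metis insert_commute insert_mono)
  moreover have "em_tree (insert (neg L) \<Gamma>) (FImp A F)" using Node by (metis insert_commute insert_mono)
  ultimately show ?case by (rule em_tree.Node)
qed

definition K :: "fm set \<Rightarrow> fm \<Rightarrow> fm set \<Rightarrow> bool" where
  "K \<Delta> A \<Gamma> = (\<forall>F \<Theta>. flift ` \<Gamma> \<subseteq> \<Theta> \<longrightarrow> nd False (\<Delta> \<union> \<Theta>) F \<longrightarrow> nd False (insert A \<Theta>) F)"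

lemma and_ctx: "nd e (insert A (insert B \<Theta>)) F \<Longrightarrow> nd e (insert (FAnd B A) \<Theta>) F"
proof -
  assume "nd e (insert A (insert B \<Theta>)) F"
  then have "nd e \<Theta> (FImp B (FImp A F))" by (intro nd.ImpI)
  then have h: "nd e (insert (FAnd B A) \<Theta>) (FImp B (FImp A F))" by (rule nd_weaken) auto
  have c: "nd e (insert (FAnd B A) \<Theta>) (FAnd B A)" by (rule nd.Assm) simp
  show ?thesis by (rule nd.ImpE[OF nd.ImpE[OF h nd.AndE1[OF c]] nd.AndE2[OF c]])
qed

lemma K_step: "K \<Delta> A \<Gamma> \<Longrightarrow> K (insert L \<Delta>) (FAnd L A) \<Gamma>"
  unfolding K_def
proof (intro allI impI)
  fix F \<Theta> assume k: "\<forall>F \<Theta>. flift ` \<Gamma> \<subseteq> \<Theta> \<longrightarrow> nd False (\<Delta> \<union> \<Theta>) F \<longrightarrow> nd False (insert A \<Theta>) F"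
    and s: "flift ` \<Gamma> \<subseteq> \<Theta>" and n: "nd False (insert L \<Delta> \<union> \<Theta>) F"
  have "nd False (\<Delta> \<union> insert L \<Theta>) F" using n by simp
  then have "nd False (insert A (insert L \<Theta>)) F" using k s by blast
  then show "nd False (insert (FAnd L A) \<Theta>) F" by (rule and_ctx)
qed

lemma leaf2:
  assumes nE: "neg (FEx (FAnd L A)) \<in> \<Theta>"
      and h: "nd False \<Theta> (FImp (FEx (FAnd (neg L) A)) C)"
  shows "nd False \<Theta> (FImp (FEx A) C)"
proof (rule nd.ImpI)
  let ?sh = "\<lambda>n. Var (Suc n)"
  let ?T = "insert (FEx A) \<Theta>"
  let ?U = "insert A (flift ` ?T)"
  have u1: "nd False (insert L ?U) (flift (FEx (FAnd L A)))"
    unfolding flift_ex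
    by (rule nd.ExI[where t="Var 0"], unfold inst_lift) (rule nd.AndI; rule nd.Assm; simp)
  have u2: "nd False (insert L ?U) (flift (neg (FEx (FAnd L A))))"
    by (rule nd.Assm) (use nE in auto)
  have nl: "nd False ?U (neg L)"
    unfolding neg_def
    by (rule nd.ImpI, rule nd.ImpE[OF u2[unfolded neg_def flift_neg] u1])
  have m2: "nd False ?U (flift (FEx (FAnd (neg L) A)))"
    unfolding flift_ex
    by (rule nd.ExI[where t="Var 0"], unfold inst_lift) (rule nd.AndI[OF nl nd.Assm], simp)
  have e2: "nd False ?T (FEx (FAnd (neg L) A))"
    by (rule nd.ExE[OF nd.Assm m2]) simp
  have "nd False ?T (FImp (FEx (FAnd (neg L) A)) C)" by (rule nd_weaken[OF h]) auto
  then show "nd False ?T C" using e2 by (rule nd.ImpE)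
qed

lemma tree_ex: "em_tree \<Delta> D \<Longrightarrow> K \<Delta> A \<Gamma> \<Longrightarrow> D = flift C \<Longrightarrow> em_tree \<Gamma> (FImp (FEx A) C)"
proof (induct arbitrary: A \<Gamma> C rule: em_tree.induct)
  case (Leaf \<Delta> F)
  let ?G = "insert (FEx A) \<Gamma>"
  have "nd False (\<Delta> \<union> flift ` ?G) (flift C)" using Leaf(1,3) by (metis nd_weaken sup_ge1)
  moreover have "flift ` \<Gamma> \<subseteq> flift ` ?G" by blast
  ultimately have m: "nd False (insert A (flift ` ?G)) (flift C)" using Leaf(2) unfolding K_def by blast
  have "nd False ?G C" by (rule nd.ExE[OF nd.Assm m]) simp
  then show ?case by (intro em_tree.Leaf nd.ImpI)
next
  case (Node L \<Delta> F)
  let ?E = "FEx (FAnd L A)"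
  have t1: "em_tree \<Gamma> (FImp ?E C)" by (rule Node(2)[OF K_step[OF Node(5)] Node(6)])
  have t2: "em_tree \<Gamma> (FImp (FEx (FAnd (neg L) A)) C)" by (rule Node(4)[OF K_step[OF Node(5)] Node(6)])
  have "em_tree (insert ?E \<Gamma>) (FImp (FEx A) C)"
  proof (rule tmap[OF tree_weaken[OF t1]])
    fix \<Theta> assume "insert ?E \<Gamma> \<subseteq> \<Theta>" "nd False \<Theta> (FImp ?E C)"
    then have "nd False \<Theta> C" by (meson insert_subset nd.Assm nd.ImpE)
    then show "nd False \<Theta> (FImp (FEx A) C)" by (intro nd.ImpI) (erule nd_weaken, auto)
  qed auto
  moreover have "em_tree (insert (neg ?E) \<Gamma>) (FImp (FEx A) C)"
    by (rule tmap[OF tree_weaken[OF t2]]) (auto intro: leaf2)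
  ultimately show ?case by (rule em_tree.Node)
qed

lemma orE_leaf:
  assumes h1: "nd e \<Delta> (FOr A B)" and h2: "nd e \<Delta> (FAnd (FImp A C) (FImp B C))"
  shows "nd e \<Delta> C"
proof (rule nd.OrE[OF h1])
  have a: "nd e (insert A \<Delta>) (FAnd (FImp A C) (FImp B C))" by (rule nd_weaken[OF h2]) auto
  show "nd e (insert A \<Delta>) C" by (rule nd.ImpE[OF nd.AndE1[OF a] nd.Assm]) simp
  have b: "nd e (insert B \<Delta>) (FAnd (FImp A C) (FImp B C))" by (rule nd_weaken[OF h2]) auto
  show "nd e (insert B \<Delta>) C" by (rule nd.ImpE[OF nd.AndE2[OF b] nd.Assm]) simp
qed

lemma main: "nd e \<Gamma> F \<Longrightarrow> em_tree \<Gamma> F"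
proof (induct rule: nd.induct)
  case (OrE e \<Gamma> A B C)
  have "em_tree \<Gamma> (FImp A C)" by (rule tree_imp[OF OrE(4)]) simp
  moreover have "em_tree \<Gamma> (FImp B C)" by (rule tree_imp[OF OrE(6)]) simp
  ultimately have "em_tree \<Gamma> (FAnd (FImp A C) (FImp B C))" by (rule tmap2) (rule nd.AndI)
  with OrE(2) show ?case by (rule tmap2) (rule orE_leaf)
next
  case (ImpI e A \<Gamma> B) then show ?case by (intro tree_imp[of "insert A \<Gamma>"]) simp_all
next
  case (ExE e \<Gamma> A C)
  have "K (insert A (flift ` \<Gamma>)) A \<Gamma>" unfolding K_def
  proof (intro allI impI)
    fix F \<Theta> assume "flift ` \<Gamma> \<subseteq> \<Theta>" "nd False (insert A (flift ` \<Gamma>) \<union> \<Theta>) F"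
    then show "nd False (insert A \<Theta>) F"
      using nd_weaken[of False "insert A (flift ` \<Gamma>) \<union> \<Theta>" F "insert A \<Theta>"] by auto
  qed
  then have "em_tree \<Gamma> (FImp (FEx A) C)" by (rule tree_ex[OF ExE(4)]) simp
  then show ?case using ExE(2) by (rule tmap2) (rule nd.ImpE)
next
  case (EM A \<Gamma> C) show ?case by (rule em_tree.Node[OF EM(2) EM(4)])
next
  case (Assm A \<Gamma> e) then show ?case by (intro em_tree.Leaf nd.Assm)
next
  case (Ax A e \<Gamma>) then show ?case by (intro em_tree.Leaf nd.Ax)
next
  case (AndI e \<Gamma> A B) show ?case by (rule tmap2[OF AndI(2) AndI(4)]) (rule nd.AndI)
next
  case (AndE1 e \<Gamma> A B) show ?case by (rule tmap[OF AndE1(2)]) (rule nd.AndE1)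
next
  case (AndE2 e \<Gamma> A B) show ?case by (rule tmap[OF AndE2(2)]) (rule nd.AndE2)
next
  case (OrI1 e \<Gamma> A B) show ?case by (rule tmap[OF OrI1(2)]) (rule nd.OrI1)
next
  case (OrI2 e \<Gamma> B A) show ?case by (rule tmap[OF OrI2(2)]) (rule nd.OrI2)
next
  case (ImpE e \<Gamma> A B) show ?case by (rule tmap2[OF ImpE(2) ImpE(4)]) (rule nd.ImpE)
next
  case (BotE e \<Gamma> A) show ?case by (rule tmap[OF BotE(2)]) (rule nd.BotE)
next
  case (ExI e \<Gamma> A t) show ?case by (rule tmap[OF ExI(2)]) (rule nd.ExI)
next
  case (Ind e \<Gamma> A) show ?case by (rule tmap2[OF Ind(2) Ind(4)]) (rule nd.Ind)
qed

theorem mainTheorem10: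
  assumes "nd True \<Gamma> F"
  shows "em_tree \<Gamma> F"
  using assms by (rule main)

end
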